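(* Let $P$ be a graph, let $S$ be as defined below, and let $R=V(P)\setminus(S\cup N(S))$. Assume that the induced subgraph $P[R]$ has no isolated vertices. Then (1) $P[R]$ has a spanning subgraph isomorphic to a disjoint union of edges and odd cycles; and (2) for every vertex $x\in R$, the graph $P[R\setminus\{x\}]$ has a spanning subgraph isomorphic to a disjoint union of edges and odd cycles.
   Context: All graphs are finite, simple and undirected. For $S\subseteq V(P)$, $N(S)=\bigcup_{v\in S}N(v)$ (open neighborhood), $N(\emptyset)=\emptyset$. Let $I(P)$ be the set of isolated vertices of $P$. $S$ is an independent set $S\subseteq V(P)\setminus I(P)$ that maximizes $|S|-|N(S)|$, chosen, among all maximizers, to maximize $|S|$ (possibly $S=\emptyset$). Then $S$, $N(S)$, $R$ partition $V(P)$. *)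

theory Defs
  imports Main
begin

definition simple_graph :: "'a set \<Rightarrow> ('a \<Rightarrow> 'a \<Rightarrow> bool) \<Rightarrow> bool" where
  "simple_graph V E \<longleftrightarrow> finite V \<and> (\<forall>x y. E x y \<longrightarrow> x \<in> V \<and> y \<in> V)
     \<and> (\<forall>x y. E x y \<longrightarrow> E y x) \<and> (\<forall>x. \<not> E x x)"

definition nbhd :: "'a set \<Rightarrow> ('a \<Rightarrow> 'a \<Rightarrow> bool) \<Rightarrow> 'a set \<Rightarrow> 'a set" where
  "nbhd V E S = {y \<in> V. \<exists>x\<in>S. E x y}"

definition isolated_vertices :: "'a set \<Rightarrow> ('a \<Rightarrow> 'a \<Rightarrow> bool) \<Rightarrow> 'a set" where
  "isolated_vertices V E = {v \<in> V. \<forall>u. \<not> E v u}"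

definition independent :: "('a \<Rightarrow> 'a \<Rightarrow> bool) \<Rightarrow> 'a set \<Rightarrow> bool" where
  "independent E S \<longleftrightarrow> (\<forall>x\<in>S. \<forall>y\<in>S. \<not> E x y)"

definition admissible :: "'a set \<Rightarrow> ('a \<Rightarrow> 'a \<Rightarrow> bool) \<Rightarrow> 'a set \<Rightarrow> bool" where
  "admissible V E S \<longleftrightarrow> S \<subseteq> V - isolated_vertices V E \<and> independent E S"

definition surplus :: "'a set \<Rightarrow> ('a \<Rightarrow> 'a \<Rightarrow> bool) \<Rightarrow> 'a set \<Rightarrow> int" where
  "surplus V E S = int (card S) - int (card (nbhd V E S))"

definition optimal_set :: "'a set \<Rightarrow> ('a \<Rightarrow> 'a \<Rightarrow> bool) \<Rightarrow> 'a set \<Rightarrow> bool" where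
  "optimal_set V E S \<longleftrightarrow> admissible V E S
     \<and> (\<forall>T. admissible V E T \<longrightarrow> surplus V E T \<le> surplus V E S)
     \<and> (\<forall>T. admissible V E T \<longrightarrow> surplus V E T = surplus V E S \<longrightarrow> card T \<le> card S)"

definition edge_or_odd_cycle :: "('a \<Rightarrow> 'a \<Rightarrow> bool) \<Rightarrow> 'a list \<Rightarrow> bool" where
  "edge_or_odd_cycle E xs \<longleftrightarrow> distinct xs \<and>
     ((length xs = 2 \<and> E (xs ! 0) (xs ! 1)) \<or>
      (length xs \<ge> 3 \<and> odd (length xs) \<and>
       (\<forall>i < length xs. E (xs ! i) (xs ! ((i + 1) mod length xs)))))"

text \<open>The induced subgraph P[W] has a spanning subgraph isomorphic to a disjoint union of
  edges and odd cycles: W is partitioned into vertex sets of pieces, each an edge or odd cycle of P.\<close>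
definition has_edge_odd_cycle_cover :: "('a \<Rightarrow> 'a \<Rightarrow> bool) \<Rightarrow> 'a set \<Rightarrow> bool" where
  "has_edge_odd_cycle_cover E W \<longleftrightarrow> (\<exists>C :: 'a list set.
     (\<forall>c\<in>C. edge_or_odd_cycle E c) \<and>
     (\<forall>c\<in>C. \<forall>d\<in>C. c \<noteq> d \<longrightarrow> set c \<inter> set d = {}) \<and>
     (\<Union>c\<in>C. set c) = W)"

end

theory Submission
  imports Defs
begin

lemma hall:
  fixes I :: "'i set" and A :: "'i \<Rightarrow> 'b set"
  assumes "finite I" "\<forall>i\<in>I. finite (A i)" "\<forall>J\<subseteq>I. card J \<le> card (\<Union>(A ` J))"
  shows "\<exists>f. inj_on f I \<and> (\<forall>i\<in>I. f i \<in> A i)"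
  using assms
proof (induction "card I" arbitrary: I A rule: less_induct)
  case less
  show ?case
  proof (cases "I = {}")
    case True then show ?thesis by auto
  next
    case False
    show ?thesis
    proof (cases "\<exists>J. J \<subset> I \<and> J \<noteq> {} \<and> card (\<Union>(A ` J)) = card J")
      case True
      then obtain J where J: "J \<subset> I" "J \<noteq> {}" "card (\<Union>(A ` J)) = card J" by blast
      have finJ: "finite J" using J(1) less.prems(1) finite_subset by blast
      have "\<exists>f. inj_on f J \<and> (\<forall>i\<in>J. f i \<in> A i)"
        apply (rule less.hyps)
        using J less.prems finJ by (auto intro: psubset_card_mono)
      then obtain f1 where f1: "inj_on f1 J" "\<forall>i\<in>J. f1 i \<in> A i" by blast
      define A2 where "A2 = (\<lambda>i. A i - \<Union>(A ` J))"
      have finUJ: "finite (\<Union>(A ` J))" using finJ J(1) less.prems(2) by auto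
      have "\<exists>f. inj_on f (I - J) \<and> (\<forall>i\<in>I - J. f i \<in> A2 i)"
      proof (rule less.hyps)
        show "card (I - J) < card I"
        proof -
          have "card (I - J) = card I - card J" using card_Diff_subset[OF finJ] J(1) by auto
          moreover have "card J > 0" using finJ J(2) by (simp add: card_gt_0_iff)
          moreover have "card J \<le> card I" using J(1) less.prems(1) by (simp add: card_mono)
          ultimately show ?thesis by linarith
        qed
        show "finite (I - J)" using less.prems(1) by auto
        show "\<forall>i\<in>I - J. finite (A2 i)" using less.prems(2) by (auto simp: A2_def)
        show "\<forall>K\<subseteq>I - J. card K \<le> card (\<Union>(A2 ` K))"
        proof (intro allI impI)
          fix K assume K: "K \<subseteq> I - J"
          have finK: "finite K" using K less.prems(1) finite_subset by blast
          have eq: "\<Union>(A2 ` K) = \<Union>(A ` (K \<union> J)) - \<Union>(A ` J)" by (auto simp: A2_def)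
          have sub: "\<Union>(A ` J) \<subseteq> \<Union>(A ` (K \<union> J))" by auto
          have finKJ: "finite (\<Union>(A ` (K \<union> J)))" using K J(1) finK finJ less.prems(2) by auto
          have c1: "card (\<Union>(A2 ` K)) = card (\<Union>(A ` (K \<union> J))) - card (\<Union>(A ` J))"
            unfolding eq using card_Diff_subset[OF finUJ sub] .
          have c2: "card (K \<union> J) = card K + card J"
            using K finK finJ by (subst card_Un_disjoint) auto
          have c3: "card (K \<union> J) \<le> card (\<Union>(A ` (K \<union> J)))"
          proof -
            have "K \<union> J \<subseteq> I" using K J(1) by auto
            then show ?thesis using less.prems(3) by blast
          qed
          show "card K \<le> card (\<Union>(A2 ` K))" using c1 c2 c3 J(3) by linarith
        qed
      qed
      then obtain f2 where f2: "inj_on f2 (I - J)" "\<forall>i\<in>I - J. f2 i \<in> A2 i" by blast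
      define f where "f = (\<lambda>i. if i \<in> J then f1 i else f2 i)"
      have "inj_on f I"
      proof (rule inj_onI)
        fix x y assume xy: "x \<in> I" "y \<in> I" "f x = f y"
        show "x = y"
        proof (cases "x \<in> J"; cases "y \<in> J")
          assume "x \<in> J" "y \<in> J" then show ?thesis using xy f1(1) by (auto simp: f_def inj_on_def)
        next
          assume a: "x \<in> J" "y \<notin> J"
          then have "f1 x \<in> \<Union>(A ` J)" using f1(2) by auto
          moreover have "f2 y \<notin> \<Union>(A ` J)" using f2(2) a xy by (auto simp: A2_def)
          ultimately show ?thesis using xy a by (auto simp: f_def)
        next
          assume a: "x \<notin> J" "y \<in> J"
          then have "f1 y \<in> \<Union>(A ` J)" using f1(2) by auto
          moreover have "f2 x \<notin> \<Union>(A ` J)" using f2(2) a xy by (auto simp: A2_def)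
          ultimately show ?thesis using xy a by (auto simp: f_def)
        next
          assume "x \<notin> J" "y \<notin> J" then show ?thesis using xy f2(1) by (auto simp: f_def inj_on_def)
        qed
      qed
      moreover have "\<forall>i\<in>I. f i \<in> A i" using f1(2) f2(2) by (auto simp: f_def A2_def)
      ultimately show ?thesis by blast
    next
      case False2: False
      obtain i where i: "i \<in> I" using False by blast
      have "card {i} \<le> card (A i)" using less.prems(3)[rule_format, of "{i}"] i by simp
      then have "A i \<noteq> {}" by auto
      then obtain a where a: "a \<in> A i" by blast
      define A2 where "A2 = (\<lambda>j. A j - {a})"
      have "\<exists>f. inj_on f (I - {i}) \<and> (\<forall>j\<in>I - {i}. f j \<in> A2 j)"
      proof (rule less.hyps)
        show "card (I - {i}) < card I" using i less.prems(1) by (rule card_Diff1_less[rotated])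
        show "finite (I - {i})" using less.prems(1) by auto
        show "\<forall>j\<in>I - {i}. finite (A2 j)" using less.prems(2) by (auto simp: A2_def)
        show "\<forall>K\<subseteq>I - {i}. card K \<le> card (\<Union>(A2 ` K))"
        proof (intro allI impI)
          fix K assume K: "K \<subseteq> I - {i}"
          show "card K \<le> card (\<Union>(A2 ` K))"
          proof (cases "K = {}")
            case True then show ?thesis by simp
          next
            case Kne: False
            have finK: "finite K" using K less.prems(1) finite_subset by blast
            have "K \<subset> I" using K i by auto
            then have "card (\<Union>(A ` K)) \<noteq> card K" using False2 Kne by blast
            moreover have "card K \<le> card (\<Union>(A ` K))" using less.prems(3) K by auto
            ultimately have lt: "card K < card (\<Union>(A ` K))" by simp
            have eq: "\<Union>(A2 ` K) = \<Union>(A ` K) - {a}" by (auto simp: A2_def)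
            have "card (\<Union>(A ` K)) - 1 \<le> card (\<Union>(A ` K) - {a})"
              by (simp add: card_Diff_singleton_if)
            then show ?thesis unfolding eq using lt by linarith
          qed
        qed
      qed
      then obtain f2 where f2: "inj_on f2 (I - {i})" "\<forall>j\<in>I - {i}. f2 j \<in> A2 j" by blast
      define f where "f = f2(i := a)"
      have "inj_on f (I - {i})" using f2(1) by (auto simp: f_def inj_on_def)
      moreover have "f i \<notin> f ` (I - {i})" using f2(2) by (auto simp: f_def A2_def)
      ultimately have "inj_on f (insert i (I - {i}))" using inj_on_insert[of f i "I - {i}"] by simp
      moreover have "insert i (I - {i}) = I" using i by auto
      moreover have "\<forall>j\<in>I. f j \<in> A j" using f2(2) a by (auto simp: f_def A2_def)
      ultimately show ?thesis by metis
    qed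
  qed
qed

lemma cycle_pieces:
  fixes g :: "nat \<Rightarrow> 'a"
  assumes inj: "inj_on g {..<n}" and n2: "n \<ge> 2"
    and adj: "\<forall>i<n. E (g i) (g (Suc i mod n))"
  shows "\<exists>P. (\<forall>c\<in>P. edge_or_odd_cycle E c) \<and> (\<forall>c\<in>P. \<forall>d\<in>P. c \<noteq> d \<longrightarrow> set c \<inter> set d = {})
     \<and> (\<Union>c\<in>P. set c) = g ` {..<n}"
proof (cases "odd n")
  case True
  define xs where "xs = map g [0..<n]"
  have "edge_or_odd_cycle E xs"
  proof -
    have "distinct xs" using inj by (simp add: xs_def distinct_map lessThan_atLeast0)
    moreover have "length xs \<ge> 3" using True n2 by (simp add: xs_def) presburger
    moreover have "\<forall>i < length xs. E (xs ! i) (xs ! ((i + 1) mod length xs))"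
      using adj by (auto simp: xs_def)
    ultimately show ?thesis using True by (auto simp: edge_or_odd_cycle_def xs_def)
  qed
  moreover have "set xs = g ` {..<n}" by (auto simp: xs_def)
  ultimately show ?thesis by (intro exI[of _ "{xs}"]) auto
next
  case False
  define P where "P = (\<lambda>j. [g (2*j), g (2*j+1)]) ` {..<n div 2}"
  have "\<forall>c\<in>P. edge_or_odd_cycle E c"
  proof
    fix c assume "c \<in> P"
    then obtain j where j: "j < n div 2" "c = [g (2*j), g (2*j+1)]" by (auto simp: P_def)
    have lt: "2*j+1 < n" using j False by presburger
    have "g (2*j) \<noteq> g (2*j+1)" using inj lt by (auto dest: inj_onD)
    moreover have "E (g (2*j)) (g (2*j+1))" using adj[rule_format, of "2*j"] lt by simp
    ultimately show "edge_or_odd_cycle E c" using j by (auto simp: edge_or_odd_cycle_def)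
  qed
  moreover have "\<forall>c\<in>P. \<forall>d\<in>P. c \<noteq> d \<longrightarrow> set c \<inter> set d = {}"
  proof (intro ballI impI)
    fix c d assume "c \<in> P" "d \<in> P" "c \<noteq> d"
    then obtain j k where j: "j < n div 2" "c = [g (2*j), g (2*j+1)]"
      and k: "k < n div 2" "d = [g (2*k), g (2*k+1)]" and jk: "j \<noteq> k" by (auto simp: P_def)
    have lt: "2*j+1 < n" "2*k+1 < n" using j k False by presburger+
    have a: "\<And>x y. x < n \<Longrightarrow> y < n \<Longrightarrow> g x = g y \<Longrightarrow> x = y" using inj by (auto dest: inj_onD)
    show "set c \<inter> set d = {}"
    proof (rule ccontr)
      assume "set c \<inter> set d \<noteq> {}"
      then have "g (2*j) = g (2*k) \<or> g (2*j) = g (2*k+1) \<or> g (2*j+1) = g (2*k) \<or> g (2*j+1) = g (2*k+1)"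
        using j k by auto
      then have "2*j = 2*k \<or> 2*j = 2*k+1 \<or> 2*j+1 = 2*k \<or> 2*j+1 = 2*k+1"
        using a[of "2*j" "2*k"] a[of "2*j" "2*k+1"] a[of "2*j+1" "2*k"] a[of "2*j+1" "2*k+1"] lt
        by auto
      with jk show False by presburger
    qed
  qed
  moreover have "(\<Union>c\<in>P. set c) = g ` {..<n}"
  proof
    show "(\<Union>c\<in>P. set c) \<subseteq> g ` {..<n}"
    proof
      fix x assume "x \<in> (\<Union>c\<in>P. set c)"
      then obtain j where j: "j < n div 2" "x = g (2*j) \<or> x = g (2*j+1)" by (auto simp: P_def)
      have lt: "2*j+1 < n" using j(1) False by presburger
      then show "x \<in> g ` {..<n}" using j by auto
    qed
    show "g ` {..<n} \<subseteq> (\<Union>c\<in>P. set c)"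
    proof
      fix x assume "x \<in> g ` {..<n}"
      then obtain i where i: "i < n" "x = g i" by auto
      have "i div 2 < n div 2" using i False by presburger
      moreover have "i = 2 * (i div 2) \<or> i = 2 * (i div 2) + 1" by presburger
      ultimately show "x \<in> (\<Union>c\<in>P. set c)" using i unfolding P_def by force
    qed
  qed
  ultimately show ?thesis by blast
qed

lemma funpow_in:
  assumes "f ` W \<subseteq> W" "v \<in> W" shows "(f^^i) v \<in> W"
  using assms by (induction i) auto

lemma funpow_cancel:
  assumes "inj_on f W" "f ` W \<subseteq> W" "v \<in> W"
  shows "i \<le> j \<Longrightarrow> (f^^i) v = (f^^j) v \<Longrightarrow> (f^^(j-i)) v = v"
proof (induction i arbitrary: j)
  case 0 then show ?case by simp
next
  case (Suc i)
  then obtain j' where j': "j = Suc j'" by (cases j) auto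
  have "f ((f^^i) v) = f ((f^^j') v)" using Suc.prems j' by simp
  then have "(f^^i) v = (f^^j') v"
    using assms funpow_in[OF assms(2) assms(3)] by (auto dest: inj_onD)
  then show ?case using Suc.IH[of j'] Suc.prems j' by simp
qed

lemma perm_cover:
  assumes "finite W" "inj_on f W" "f ` W \<subseteq> W" "\<forall>v\<in>W. E v (f v)" "\<forall>v. \<not> E v v"
  shows "has_edge_odd_cycle_cover E W"
  using assms
proof (induction "card W" arbitrary: W rule: less_induct)
  case less
  show ?case
  proof (cases "W = {}")
    case True
    then show ?thesis unfolding has_edge_odd_cycle_cover_def by (intro exI[of _ "{}"]) auto
  next
    case False
    then obtain v where v: "v \<in> W" by blast
    define g where "g = (\<lambda>i. (f^^i) v)"
    have gW: "\<And>i. g i \<in> W" unfolding g_def using funpow_in[OF less.prems(3) v] .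
    have "\<not> inj_on g {0..card W}"
    proof
      assume "inj_on g {0..card W}"
      then have "card (g ` {0..card W}) = card W + 1" by (simp add: card_image)
      moreover have "g ` {0..card W} \<subseteq> W" using gW by auto
      ultimately show False using card_mono[OF less.prems(1), of "g ` {0..card W}"] by linarith
    qed
    then obtain a b where "g a = g b" "a \<noteq> b" unfolding inj_on_def by blast
    then have "\<exists>i j. i < j \<and> g i = g j" by (metis linorder_neqE_nat)
    then obtain i j where ij: "i < j" "g i = g j" by blast
    have "(f^^(j-i)) v = v" using funpow_cancel[OF less.prems(2,3) v, of i j] ij by (simp add: g_def)
    then have ex: "\<exists>n. 0 < n \<and> g n = v" using ij by (intro exI[of _ "j - i"]) (auto simp: g_def)
    define n where "n = (LEAST n. 0 < n \<and> g n = v)"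
    have n: "0 < n" "g n = v" using LeastI_ex[OF ex] by (auto simp: n_def)
    have nmin: "\<And>m. 0 < m \<Longrightarrow> m < n \<Longrightarrow> g m \<noteq> v"
      using not_less_Least n_def by blast
    have g0: "g 0 = v" by (simp add: g_def)
    have gS: "\<And>i. g (Suc i) = f (g i)" by (simp add: g_def)
    have injg: "inj_on g {..<n}"
    proof (rule inj_onI)
      fix a b assume ab: "a \<in> {..<n}" "b \<in> {..<n}" "g a = g b"
      show "a = b"
      proof (rule ccontr)
        assume "a \<noteq> b"
        then consider "a < b" | "b < a" by linarith
        then show False
        proof cases
          case 1
          then have "g (b - a) = v" using funpow_cancel[OF less.prems(2,3) v, of a b] ab by (simp add: g_def)
          moreover have "b - a < n" "0 < b - a" using ab(2) 1 by auto
          ultimately show False using nmin[of "b - a"] by blast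
        next
          case 2
          then have "g (a - b) = v" using funpow_cancel[OF less.prems(2,3) v, of b a] ab by (simp add: g_def)
          moreover have "a - b < n" "0 < a - b" using ab(1) 2 by auto
          ultimately show False using nmin[of "a - b"] by blast
        qed
      qed
    qed
    have n1: "n \<noteq> 1"
    proof
      assume "n = 1"
      then have "f v = v" using n gS g0 by (metis One_nat_def)
      then show False using less.prems(4,5) v by metis
    qed
    have adjg: "\<forall>i<n. g (Suc i mod n) = f (g i)"
    proof (intro allI impI)
      fix i assume "i < n"
      show "g (Suc i mod n) = f (g i)"
      proof (cases "Suc i = n")
        case True then show ?thesis using n gS g0 by (metis mod_self)
      next
        case False then show ?thesis using \<open>i < n\<close> gS by simp
      qed
    qed
    define Orb where "Orb = g ` {..<n}"
    have OW: "Orb \<subseteq> W" using gW by (auto simp: Orb_def)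
    have finOrb: "finite Orb" by (simp add: Orb_def)
    have fOrb: "f ` Orb \<subseteq> Orb"
    proof
      fix x assume "x \<in> f ` Orb"
      then obtain i where i: "i < n" "x = f (g i)" by (auto simp: Orb_def)
      then have "x = g (Suc i mod n)" using adjg by simp
      moreover have "Suc i mod n < n" using n(1) by simp
      ultimately show "x \<in> Orb" by (auto simp: Orb_def)
    qed
    have fOeq: "f ` Orb = Orb"
      using endo_inj_surj[OF finOrb fOrb inj_on_subset[OF less.prems(2) OW]] .
    define W' where "W' = W - Orb"
    have fW': "f ` W' \<subseteq> W'"
    proof
      fix y assume "y \<in> f ` W'"
      then obtain x where x: "x \<in> W'" "y = f x" by auto
      have "y \<in> W" using x less.prems(3) by (auto simp: W'_def)
      moreover have "y \<notin> Orb"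
      proof
        assume "y \<in> Orb"
        then obtain z where "z \<in> Orb" "f z = y" using fOeq by (metis imageE)
        then have "z = x" using x less.prems(2) OW by (auto simp: W'_def dest: inj_onD)
        then show False using x \<open>z \<in> Orb\<close> by (auto simp: W'_def)
      qed
      ultimately show "y \<in> W'" by (auto simp: W'_def)
    qed
    have vOrb: "v \<in> Orb" using n(1) g0 by (auto simp: Orb_def)
    have "W' \<subset> W" using vOrb v by (auto simp: W'_def)
    then have "card W' < card W" using psubset_card_mono[OF less.prems(1)] by blast
    then have "has_edge_odd_cycle_cover E W'"
      using less.hyps[of W'] less.prems fW' inj_on_subset[OF less.prems(2)]
      by (auto simp: W'_def)
    then obtain C where C: "\<forall>c\<in>C. edge_or_odd_cycle E c"
      "\<forall>c\<in>C. \<forall>d\<in>C. c \<noteq> d \<longrightarrow> set c \<inter> set d = {}" "(\<Union>c\<in>C. set c) = W'"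
      unfolding has_edge_odd_cycle_cover_def by blast
    have "\<exists>P. (\<forall>c\<in>P. edge_or_odd_cycle E c) \<and> (\<forall>c\<in>P. \<forall>d\<in>P. c \<noteq> d \<longrightarrow> set c \<inter> set d = {})
       \<and> (\<Union>c\<in>P. set c) = g ` {..<n}"
    proof (rule cycle_pieces[OF injg])
      show "2 \<le> n" using n(1) n1 by linarith
      show "\<forall>i<n. E (g i) (g (Suc i mod n))" using adjg less.prems(4) gW by simp
    qed
    then obtain P where P: "\<forall>c\<in>P. edge_or_odd_cycle E c"
      "\<forall>c\<in>P. \<forall>d\<in>P. c \<noteq> d \<longrightarrow> set c \<inter> set d = {}" "(\<Union>c\<in>P. set c) = Orb"
      unfolding Orb_def by blast
    show ?thesis unfolding has_edge_odd_cycle_cover_def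
    proof (intro exI[of _ "C \<union> P"] conjI)
      show "\<forall>c\<in>C \<union> P. edge_or_odd_cycle E c" using C(1) P(1) by blast
      show "(\<Union>c\<in>C \<union> P. set c) = W" using C(3) P(3) OW by (auto simp: W'_def)
      show "\<forall>c\<in>C \<union> P. \<forall>d\<in>C \<union> P. c \<noteq> d \<longrightarrow> set c \<inter> set d = {}"
      proof (intro ballI impI)
        fix c d assume cd: "c \<in> C \<union> P" "d \<in> C \<union> P" "c \<noteq> d"
        have disj: "W' \<inter> Orb = {}" by (auto simp: W'_def)
        show "set c \<inter> set d = {}"
        proof (cases "c \<in> C"; cases "d \<in> C")
          assume "c \<in> C" "d \<in> C" then show ?thesis using C(2) cd by blast
        next
          assume "c \<in> C" "d \<notin> C"
          then have "set c \<subseteq> W'" "set d \<subseteq> Orb" using C(3) P(3) cd by auto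
          then show ?thesis using disj by blast
        next
          assume "c \<notin> C" "d \<in> C"
          then have "set d \<subseteq> W'" "set c \<subseteq> Orb" using C(3) P(3) cd by auto
          then show ?thesis using disj by blast
        next
          assume "c \<notin> C" "d \<notin> C" then show ?thesis using P(2) cd by blast
        qed
      qed
    qed
  qed
qed

lemma two_matching:
  assumes fin: "finite W" and irr: "\<forall>v. \<not> E v v" and sym: "\<forall>x y. E x y \<longrightarrow> E y x"
    and hc: "\<forall>T\<subseteq>W. independent E T \<longrightarrow> card T \<le> card {y\<in>W. \<exists>x\<in>T. E x y}"
  shows "has_edge_odd_cycle_cover E W"
proof -
  define A where "A = (\<lambda>v. {y\<in>W. E v y})"
  have "\<exists>f. inj_on f W \<and> (\<forall>i\<in>W. f i \<in> A i)"
  proof (rule hall[OF fin])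
    show "\<forall>i\<in>W. finite (A i)" using fin by (auto simp: A_def)
    show "\<forall>X\<subseteq>W. card X \<le> card (\<Union>(A ` X))"
    proof (intro allI impI)
      fix X assume X: "X \<subseteq> W"
      define NX where "NX = {y\<in>W. \<exists>x\<in>X. E x y}"
      have eqNX: "\<Union>(A ` X) = NX" by (auto simp: A_def NX_def)
      define Ind where "Ind = {x\<in>X. \<forall>y\<in>X. \<not> E x y}"
      define NI where "NI = {y\<in>W. \<exists>x\<in>Ind. E x y}"
      have finX: "finite X" using X fin finite_subset by blast
      have "independent E Ind" by (auto simp: independent_def Ind_def)
      moreover have "Ind \<subseteq> W" using X by (auto simp: Ind_def)
      ultimately have c1: "card Ind \<le> card NI" using hc by (simp add: NI_def)
      have s1: "NI \<union> (X - Ind) \<subseteq> NX"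
      proof
        fix y assume "y \<in> NI \<union> (X - Ind)"
        then show "y \<in> NX"
        proof
          assume "y \<in> NI" then show ?thesis by (auto simp: NI_def NX_def Ind_def)
        next
          assume y: "y \<in> X - Ind"
          then obtain z where "z \<in> X" "E y z" by (auto simp: Ind_def)
          then show ?thesis using y X sym by (auto simp: NX_def)
        qed
      qed
      have d1: "NI \<inter> (X - Ind) = {}" using sym by (auto simp: NI_def Ind_def)
      have finNX: "finite NX" using fin by (simp add: NX_def)
      have "card NI + card (X - Ind) \<le> card NX"
        using card_mono[OF finNX s1] card_Un_disjoint[of NI "X - Ind"] d1 finX fin
        by (simp add: NI_def)
      moreover have "card X = card Ind + card (X - Ind)"
        using card_Diff_subset[of Ind X] card_mono[of X Ind] finX finite_subset[of Ind X]
        by (auto simp: Ind_def)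
      ultimately show "card X \<le> card (\<Union>(A ` X))" unfolding eqNX using c1 by linarith
    qed
  qed
  then obtain f where f: "inj_on f W" "\<forall>i\<in>W. f i \<in> A i" by blast
  show ?thesis
  proof (rule perm_cover[OF fin f(1)])
    show "f ` W \<subseteq> W" using f(2) by (auto simp: A_def)
    show "\<forall>v\<in>W. E v (f v)" using f(2) by (auto simp: A_def)
    show "\<forall>v. \<not> E v v" using irr .
  qed
qed

theorem lemma2:
  fixes V :: "'a set" and E :: "'a \<Rightarrow> 'a \<Rightarrow> bool" and S :: "'a set"
  assumes "simple_graph V E"
    and "optimal_set V E S"
    and "\<forall>x \<in> V - (S \<union> nbhd V E S). \<exists>y \<in> V - (S \<union> nbhd V E S). E x y"
  shows "has_edge_odd_cycle_cover E (V - (S \<union> nbhd V E S))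
    \<and> (\<forall>x \<in> V - (S \<union> nbhd V E S). has_edge_odd_cycle_cover E (V - (S \<union> nbhd V E S) - {x}))"
proof -
  define R where "R = V - (S \<union> nbhd V E S)"
  have finV: "finite V" and EV: "\<forall>x y. E x y \<longrightarrow> x \<in> V \<and> y \<in> V"
    and sym: "\<forall>x y. E x y \<longrightarrow> E y x" and irr: "\<forall>v. \<not> E v v"
    using assms(1) by (auto simp: simple_graph_def)
  have admS: "admissible V E S" and optS: "\<forall>T. admissible V E T \<longrightarrow> surplus V E T \<le> surplus V E S"
    and opt2: "\<forall>T. admissible V E T \<longrightarrow> surplus V E T = surplus V E S \<longrightarrow> card T \<le> card S"
    using assms(2) by (auto simp: optimal_set_def)
  have SV: "S \<subseteq> V" using admS by (auto simp: admissible_def)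
  have finS: "finite S" using SV finV finite_subset by blast
  have finR: "finite R" using finV by (simp add: R_def)
  have key: "\<And>T. T \<subseteq> R \<Longrightarrow> independent E T \<Longrightarrow> T \<noteq> {} \<Longrightarrow> card T + 1 \<le> card {y\<in>R. \<exists>x\<in>T. E x y}"
  proof -
    fix T assume TR: "T \<subseteq> R" and indT: "independent E T" and Tne: "T \<noteq> {}"
    have finT: "finite T" using TR finR finite_subset by blast
    define NT where "NT = {y\<in>R. \<exists>x\<in>T. E x y}"
    have noST: "\<And>s t. s \<in> S \<Longrightarrow> t \<in> T \<Longrightarrow> \<not> E s t"
    proof
      fix s t assume "s \<in> S" "t \<in> T" "E s t"
      then have "t \<in> nbhd V E S" using EV by (auto simp: nbhd_def)
      then show False using \<open>t \<in> T\<close> TR by (auto simp: R_def)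
    qed
    have adm: "admissible V E (S \<union> T)"
    proof -
      have "T \<subseteq> V - isolated_vertices V E"
      proof
        fix t assume "t \<in> T"
        then have "t \<in> R" using TR by auto
        then obtain y where "E t y" using assms(3) by (auto simp: R_def)
        then show "t \<in> V - isolated_vertices V E" using \<open>t \<in> R\<close>
          by (auto simp: R_def isolated_vertices_def)
      qed
      moreover have "independent E (S \<union> T)"
        using admS indT noST sym unfolding admissible_def independent_def by blast
      ultimately show ?thesis using admS by (auto simp: admissible_def)
    qed
    have nbU: "nbhd V E (S \<union> T) = nbhd V E S \<union> NT"
    proof
      show "nbhd V E (S \<union> T) \<subseteq> nbhd V E S \<union> NT"
      proof
        fix y assume y: "y \<in> nbhd V E (S \<union> T)"
        show "y \<in> nbhd V E S \<union> NT"
        proof (cases "y \<in> nbhd V E S")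
          case True then show ?thesis by simp
        next
          case False
          then obtain x where x: "x \<in> T" "E x y" "y \<in> V" using y by (auto simp: nbhd_def)
          have "y \<notin> S" using noST x sym by blast
          then show ?thesis using x False by (auto simp: NT_def R_def)
        qed
      qed
      show "nbhd V E S \<union> NT \<subseteq> nbhd V E (S \<union> T)"
        by (auto simp: nbhd_def NT_def R_def)
    qed
    have finNS: "finite (nbhd V E S)" using finV by (simp add: nbhd_def)
    have finNT: "finite NT" using finR by (simp add: NT_def)
    have "nbhd V E S \<inter> NT = {}" by (auto simp: NT_def R_def)
    then have cN: "card (nbhd V E (S \<union> T)) = card (nbhd V E S) + card NT"
      using nbU card_Un_disjoint[OF finNS finNT] by simp
    have "S \<inter> T = {}" using TR by (auto simp: R_def)
    then have cS: "card (S \<union> T) = card S + card T" using card_Un_disjoint[OF finS finT] by simp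
    have le: "surplus V E (S \<union> T) \<le> surplus V E S" using optS adm by blast
    then have "card T \<le> card NT" using cN cS by (simp add: surplus_def)
    moreover have "card T \<noteq> card NT"
    proof
      assume "card T = card NT"
      then have "surplus V E (S \<union> T) = surplus V E S" using cN cS by (simp add: surplus_def)
      then have "card (S \<union> T) \<le> card S" using opt2 adm by blast
      then show False using cS Tne finT by simp
    qed
    ultimately show "card T + 1 \<le> card {y\<in>R. \<exists>x\<in>T. E x y}" unfolding NT_def by simp
  qed
  have p1: "has_edge_odd_cycle_cover E R"
  proof (rule two_matching[OF finR irr sym], intro allI impI)
    fix T assume "T \<subseteq> R" "independent E T"
    then show "card T \<le> card {y\<in>R. \<exists>x\<in>T. E x y}"
      using key[of T] by (cases "T = {}") auto
  qed
  have p2: "has_edge_odd_cycle_cover E (R - {x})" if xR: "x \<in> R" for x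
  proof (rule two_matching)
    show "finite (R - {x})" using finR by simp
    show "\<forall>v. \<not> E v v" using irr .
    show "\<forall>x y. E x y \<longrightarrow> E y x" using sym .
  next
    show "\<forall>T\<subseteq>R - {x}. independent E T \<longrightarrow> card T \<le> card {y\<in>R - {x}. \<exists>x\<in>T. E x y}"
    proof (intro allI impI)
    fix T assume T: "T \<subseteq> R - {x}" "independent E T"
    show "card T \<le> card {y\<in>R - {x}. \<exists>x\<in>T. E x y}"
    proof (cases "T = {}")
      case True then show ?thesis by simp
    next
      case False
      have a: "card T + 1 \<le> card {y\<in>R. \<exists>x\<in>T. E x y}" using key[of T] T False by auto
      have eq: "{y\<in>R - {x}. \<exists>x\<in>T. E x y} = {y\<in>R. \<exists>x\<in>T. E x y} - {x}" by auto
      have b: "card {y\<in>R. \<exists>x\<in>T. E x y} - 1 \<le> card ({y\<in>R. \<exists>x\<in>T. E x y} - {x})"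
        by (simp add: card_Diff_singleton_if)
      show ?thesis unfolding eq using a b by linarith
    qed
    qed
  qed
  show ?thesis using p1 p2 unfolding R_def by blast
qed

end
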